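(* Let $H$ be an infinite-dimensional complex Hilbert space and let $\varphi: B(H)\to B(H)$ be an additive map whose range contains $F_2(H)$ and such that $H_{\varphi(T)\varphi(S)^{*}}(\{\lambda\}) = H_{TS^{*}}(\{\lambda\})$ for all $T,S\in B(H)$ and $\lambda\in\mathbb{C}$. Then $\varphi$ is injective and linear, and for every $R\in B(H)$, $R$ has rank one if and only if $\varphi(R)$ has rank one.
   Context: $B(H)$ denotes the algebra of bounded linear operators on $H$, and $T^*$ the adjoint of $T$. $F_2(H)$ is the set of operators in $B(H)$ of rank at most two. For $T\in B(H)$ and $x\in H$, the local resolvent set $\rho_T(x)$ is the union of all open sets $U\subseteq\mathbb{C}$ for which there is an analytic $f:U\to H$ with $(\mu I-T)f(\mu)=x$ for all $\mu\in U$; the local spectrum is $\sigma_T(x)=\mathbb{C}\setminus\rho_T(x)$. For $F\subseteq\mathbb{C}$, $H_T(F)=\{x\in H: \sigma_T(x)\subseteq F\}$. *)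

theory Defs
  imports "HOL-Analysis.Analysis"
begin

class scaleC =
  fixes scaleC :: "complex \<Rightarrow> 'a \<Rightarrow> 'a" (infixr "*\<^sub>C" 75)

class complex_vector = real_vector + scaleC +
  assumes scaleC_add_right: "a *\<^sub>C (x + y) = a *\<^sub>C x + a *\<^sub>C y"
    and scaleC_add_left: "(a + b) *\<^sub>C x = a *\<^sub>C x + b *\<^sub>C x"
    and scaleC_scaleC: "a *\<^sub>C (b *\<^sub>C x) = (a * b) *\<^sub>C x"
    and scaleC_one: "1 *\<^sub>C x = x"
    and scaleR_scaleC: "scaleR r x = complex_of_real r *\<^sub>C x"

class complex_inner = complex_vector + real_normed_vector +
  fixes cinner :: "'a \<Rightarrow> 'a \<Rightarrow> complex"
  assumes cinner_commute: "cinner x y = cnj (cinner y x)"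
    and cinner_add_left: "cinner (x + y) z = cinner x z + cinner y z"
    and cinner_scaleC_left: "cinner (r *\<^sub>C x) y = cnj r * cinner x y"
    and cinner_ge_zero: "0 \<le> Re (cinner x x)"
    and cinner_eq_zero_iff: "cinner x x = 0 \<longleftrightarrow> x = 0"
    and norm_eq_sqrt_cinner: "norm x = sqrt (Re (cinner x x))"

class chilbert_space = complex_inner + complete_space

definition cspan :: "'a::complex_vector set \<Rightarrow> 'a set" where
  "cspan V = {x. \<exists>F c. finite F \<and> F \<subseteq> V \<and> x = (\<Sum>v\<in>F. c v *\<^sub>C v)}"

definition infinite_dimensional :: "'a::complex_vector itself \<Rightarrow> bool" where
  "infinite_dimensional _ \<longleftrightarrow> \<not> (\<exists>V::'a set. finite V \<and> cspan V = UNIV)"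

definition clinear :: "('a::complex_vector \<Rightarrow> 'b::complex_vector) \<Rightarrow> bool" where
  "clinear T \<longleftrightarrow> (\<forall>x y. T (x + y) = T x + T y) \<and> (\<forall>c x. T (c *\<^sub>C x) = c *\<^sub>C T x)"

definition bops :: "('a::complex_inner \<Rightarrow> 'a) set" where
  "bops = {T. clinear T \<and> (\<exists>K. \<forall>x. norm (T x) \<le> K * norm x)}"

definition adj :: "('a::complex_inner \<Rightarrow> 'a) \<Rightarrow> ('a \<Rightarrow> 'a)" where
  "adj T = (THE S. \<forall>x y. cinner (T x) y = cinner x (S y))"

definition rank_le :: "('a::complex_vector \<Rightarrow> 'a) \<Rightarrow> nat \<Rightarrow> bool" where
  "rank_le T n \<longleftrightarrow> (\<exists>V. finite V \<and> card V \<le> n \<and> range T \<subseteq> cspan V)"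

definition rank_one :: "('a::complex_vector \<Rightarrow> 'a) \<Rightarrow> bool" where
  "rank_one T \<longleftrightarrow> rank_le T 1 \<and> \<not> rank_le T 0"

definition F2 :: "('a::complex_inner \<Rightarrow> 'a) set" where
  "F2 = {T \<in> bops. rank_le T 2}"

definition hol_on :: "(complex \<Rightarrow> 'a::complex_inner) \<Rightarrow> complex set \<Rightarrow> bool" where
  "hol_on f U \<longleftrightarrow> (\<forall>z\<in>U. \<exists>D. (f has_derivative (\<lambda>h. h *\<^sub>C D)) (at z))"

definition local_resolvent :: "('a::complex_inner \<Rightarrow> 'a) \<Rightarrow> 'a \<Rightarrow> complex set" where
  "local_resolvent T x = \<Union>{U. open U \<and> (\<exists>f. hol_on f U \<and> (\<forall>\<mu>\<in>U. \<mu> *\<^sub>C f \<mu> - T (f \<mu>) = x))}"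

definition local_spectrum :: "('a::complex_inner \<Rightarrow> 'a) \<Rightarrow> 'a \<Rightarrow> complex set" where
  "local_spectrum T x = - local_resolvent T x"

definition spectral_subspace :: "('a::complex_inner \<Rightarrow> 'a) \<Rightarrow> complex set \<Rightarrow> 'a set" where
  "spectral_subspace T F = {x. local_spectrum T x \<subseteq> F}"

end

theory Submission
  imports Defs
begin



context complex_vector begin

lemma scaleC_zero_left [simp]: "0 *\<^sub>C x = 0"
proof -
  have "0 *\<^sub>C x = 0 *\<^sub>C x + 0 *\<^sub>C x" using scaleC_add_left[of 0 0 x] by simp
  thus ?thesis by simp
qed

lemma scaleC_zero_right [simp]: "a *\<^sub>C 0 = 0"
proof -
  have "a *\<^sub>C 0 = a *\<^sub>C 0 + a *\<^sub>C 0" using scaleC_add_right[of a 0 0] by simp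
  thus ?thesis by simp
qed

lemma scaleC_minus_left: "(- a) *\<^sub>C x = - (a *\<^sub>C x)"
proof -
  have "a *\<^sub>C x + (- a) *\<^sub>C x = 0" using scaleC_add_left[of a "-a" x] by simp
  from minus_unique[OF this] show ?thesis by simp
qed

lemma scaleC_minus_right: "a *\<^sub>C (- x) = - (a *\<^sub>C x)"
proof -
  have "a *\<^sub>C x + a *\<^sub>C (- x) = 0" using scaleC_add_right[of a x "-x"] by simp
  from minus_unique[OF this] show ?thesis by simp
qed

lemma scaleC_diff_left: "(a - b) *\<^sub>C x = a *\<^sub>C x - b *\<^sub>C x"
  using scaleC_add_left[of a "-b" x] by (simp add: scaleC_minus_left)

lemma scaleC_diff_right: "a *\<^sub>C (x - y) = a *\<^sub>C x - a *\<^sub>C y"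
  using scaleC_add_right[of a x "-y"] by (simp add: scaleC_minus_right)

lemma scaleC_left_commute: "a *\<^sub>C (b *\<^sub>C x) = b *\<^sub>C (a *\<^sub>C x)"
  by (simp add: scaleC_scaleC mult.commute)

lemma scaleC_eq_0_iff [simp]: "a *\<^sub>C x = 0 \<longleftrightarrow> a = 0 \<or> x = 0"
proof
  assume h: "a *\<^sub>C x = 0"
  show "a = 0 \<or> x = 0"
  proof (cases "a = 0")
    case False
    have "x = (inverse a * a) *\<^sub>C x" using False by (simp add: scaleC_one)
    also have "\<dots> = inverse a *\<^sub>C (a *\<^sub>C x)" by (simp add: scaleC_scaleC)
    also have "\<dots> = 0" using h by simp
    finally show ?thesis by simp
  qed simp
qed auto

end

context complex_inner begin

lemma cinner_scaleC_right: "cinner x (c *\<^sub>C y) = c * cinner x y"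
  by (subst cinner_commute) (simp add: cinner_scaleC_left cinner_commute[of y x])

lemma cinner_add_right: "cinner x (y + z) = cinner x y + cinner x z"
  by (subst cinner_commute) (simp add: cinner_add_left cinner_commute[of y x] cinner_commute[of z x])

lemma cinner_zero_left [simp]: "cinner 0 y = 0"
  using cinner_add_left[of 0 0 y] by simp

lemma cinner_zero_right [simp]: "cinner y 0 = 0"
  using cinner_add_right[of y 0 0] by simp

lemma cinner_minus_left: "cinner (- x) y = - cinner x y"
proof -
  have "cinner x y + cinner (- x) y = 0" using cinner_add_left[of x "-x" y] by simp
  from group_add_class.minus_unique[OF this] show ?thesis by simp
qed

lemma cinner_minus_right: "cinner y (- x) = - cinner y x"
proof -
  have "cinner y x + cinner y (- x) = 0" using cinner_add_right[of y x "-x"] by simp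
  from group_add_class.minus_unique[OF this] show ?thesis by simp
qed

lemma cinner_diff_left: "cinner (x - y) z = cinner x z - cinner y z"
  using cinner_add_left[of x "-y" z] by (simp add: cinner_minus_left)

lemma cinner_diff_right: "cinner z (x - y) = cinner z x - cinner z y"
  using cinner_add_right[of z x "-y"] by (simp add: cinner_minus_right)

lemma cinner_self_real: "cinner x x = complex_of_real (Re (cinner x x))"
proof -
  have "Im (cnj (cinner x x)) = Im (cinner x x)" by (simp only: cinner_commute[of x x, symmetric])
  hence "Im (cinner x x) = 0" by simp
  thus ?thesis by (simp add: complex_eq_iff)
qed

lemma norm_sq_cinner: "(norm x)\<^sup>2 = Re (cinner x x)"
  using cinner_ge_zero[of x] by (simp add: norm_eq_sqrt_cinner)

lemma norm_scaleC: "norm (a *\<^sub>C x) = cmod a * norm x"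
proof -
  have "(norm (a *\<^sub>C x))\<^sup>2 = Re (cnj a * (a * cinner x x))"
    by (simp only: norm_sq_cinner cinner_scaleC_left cinner_scaleC_right mult.left_commute)
  also have "cnj a * (a * cinner x x) = complex_of_real ((cmod a)\<^sup>2 * Re (cinner x x))"
  proof -
    have "cnj a * (a * cinner x x) = (a * cnj a) * complex_of_real (Re (cinner x x))"
      by (subst cinner_self_real) (simp only: mult_ac)
    also have "\<dots> = complex_of_real ((cmod a)\<^sup>2) * complex_of_real (Re (cinner x x))"
      by (simp only: complex_norm_square)
    finally show ?thesis by simp
  qed
  finally have "(norm (a *\<^sub>C x))\<^sup>2 = (cmod a * norm x)\<^sup>2"
    by (simp add: norm_sq_cinner power_mult_distrib)
  thus ?thesis by (simp add: power2_eq_iff_nonneg)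
qed

lemma cinner_expand: "cinner (x - t *\<^sub>C y) (x - t *\<^sub>C y)
   = cinner x x - t * cinner x y - cnj t * cinner y x + cnj t * t * cinner y y"
  by (simp add: cinner_diff_left cinner_diff_right cinner_scaleC_left cinner_scaleC_right algebra_simps)

lemma cinner_key:
  assumes "y \<noteq> 0"
  shows "Re (cinner (x - (cinner y x / cinner y y) *\<^sub>C y) (x - (cinner y x / cinner y y) *\<^sub>C y))
     = Re (cinner x x) - (cmod (cinner y x))\<^sup>2 / Re (cinner y y)"
proof -
  define N where "N = Re (cinner y y)"
  define a where "a = cinner y x"
  have N: "cinner y y = complex_of_real N" unfolding N_def by (rule cinner_self_real)
  have Npos: "N \<noteq> 0" using assms N cinner_eq_zero_iff[of y] by auto
  have xy: "cinner x y = cnj a" unfolding a_def by (rule cinner_commute)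
  have aa: "cnj a * a = complex_of_real ((cmod a)\<^sup>2)"
    by (simp only: complex_norm_square mult.commute)
  have "cinner (x - (a / complex_of_real N) *\<^sub>C y) (x - (a / complex_of_real N) *\<^sub>C y)
     = cinner x x - complex_of_real ((cmod a)\<^sup>2 / N)"
    unfolding cinner_expand xy N[symmetric] using Npos
    apply (simp add: a_def[symmetric] N)
    using aa by (simp add: field_simps)
  thus ?thesis unfolding N_def a_def using N by simp
qed

lemma cauchy_schwarz: "cmod (cinner y x) \<le> norm y * norm x"
proof (cases "y = 0")
  case False
  have N: "Re (cinner y y) > 0"
  proof -
    have "cinner y y \<noteq> 0" using False cinner_eq_zero_iff[of y] by simp
    hence "Re (cinner y y) \<noteq> 0" using cinner_self_real[of y] by (metis of_real_0)
    thus ?thesis using cinner_ge_zero[of y] by linarith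
  qed
  have "0 \<le> Re (cinner x x) - (cmod (cinner y x))\<^sup>2 / Re (cinner y y)"
    using cinner_key[OF False, of x] cinner_ge_zero[of "x - (cinner y x / cinner y y) *\<^sub>C y"] by linarith
  hence "(cmod (cinner y x))\<^sup>2 \<le> Re (cinner x x) * Re (cinner y y)"
    using N by (simp add: field_simps)
  hence "(cmod (cinner y x))\<^sup>2 \<le> (norm y * norm x)\<^sup>2"
    by (simp add: norm_sq_cinner power_mult_distrib mult.commute)
  thus ?thesis by (meson norm_ge_zero power2_le_imp_le zero_le_mult_iff)
qed simp

lemma orth_of_min:
  assumes "\<And>t. Re (cinner x x) \<le> Re (cinner (x - t *\<^sub>C y) (x - t *\<^sub>C y))"
  shows "cinner y x = 0"
proof (cases "y = 0")
  case False
  have N: "Re (cinner y y) > 0"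
  proof -
    have "cinner y y \<noteq> 0" using False cinner_eq_zero_iff[of y] by simp
    hence "Re (cinner y y) \<noteq> 0" using cinner_self_real[of y] by (metis of_real_0)
    thus ?thesis using cinner_ge_zero[of y] by linarith
  qed
  have "Re (cinner x x) \<le> Re (cinner x x) - (cmod (cinner y x))\<^sup>2 / Re (cinner y y)"
    using assms[of "cinner y x / cinner y y"] cinner_key[OF False, of x] by linarith
  hence "(cmod (cinner y x))\<^sup>2 \<le> 0" using N by (simp add: field_simps)
  thus ?thesis by simp
qed simp

end



lemma bl_scaleC_left: "bounded_linear (\<lambda>c::complex. c *\<^sub>C (u::'a::complex_inner))"
proof (rule bounded_linear_intro[where K="norm u"])
  fix x y :: complex show "(x + y) *\<^sub>C u = x *\<^sub>C u + y *\<^sub>C u" by (rule scaleC_add_left)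
next
  fix r :: real and x :: complex
  show "(r *\<^sub>R x) *\<^sub>C u = r *\<^sub>R (x *\<^sub>C u)"
    by (simp add: scaleR_scaleC scaleC_scaleC scaleR_conv_of_real)
next
  fix x :: complex show "norm (x *\<^sub>C u) \<le> norm x * norm u" by (simp add: norm_scaleC)
qed

lemma bl_scaleC_right: "bounded_linear (\<lambda>v::'a::complex_inner. k *\<^sub>C v)"
proof (rule bounded_linear_intro[where K="cmod k"])
  fix x y :: 'a show "k *\<^sub>C (x + y) = k *\<^sub>C x + k *\<^sub>C y" by (rule scaleC_add_right)
next
  fix r :: real and x :: 'a
  show "k *\<^sub>C (r *\<^sub>R x) = r *\<^sub>R (k *\<^sub>C x)"
    by (simp add: scaleR_scaleC scaleC_scaleC mult.commute)
next
  fix x :: 'a show "norm (k *\<^sub>C x) \<le> norm x * cmod k" by (simp add: norm_scaleC mult.commute)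
qed

lemma bl_functional:
  fixes l :: "'a::complex_inner \<Rightarrow> complex"
  assumes add: "\<And>x y. l (x + y) = l x + l y" and sc: "\<And>c x. l (c *\<^sub>C x) = c * l x"
    and bd: "\<And>x. cmod (l x) \<le> K * norm x"
  shows "bounded_linear l"
proof (rule bounded_linear_intro[where K=K])
  fix r :: real and x :: 'a
  show "l (r *\<^sub>R x) = r *\<^sub>R l x" using sc[of "complex_of_real r" x]
    by (simp add: scaleR_scaleC scaleR_conv_of_real)
qed (simp_all add: add bd mult.commute)

lemma bl_cinner: "bounded_linear (cinner (x::'a::complex_inner))"
  by (rule bl_functional[where K="norm x"])
     (simp_all add: cinner_add_right cinner_scaleC_right cauchy_schwarz)

lemma bl_op:
  fixes T :: "'a::complex_inner \<Rightarrow> 'a"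
  assumes "T \<in> bops" shows "bounded_linear T"
proof -
  from assms obtain K where cl: "clinear T" and K: "\<And>x. norm (T x) \<le> K * norm x"
    unfolding bops_def by auto
  show ?thesis
  proof (rule bounded_linear_intro[where K=K])
    fix r :: real and x :: 'a
    show "T (r *\<^sub>R x) = r *\<^sub>R T x" using cl unfolding clinear_def by (simp add: scaleR_scaleC)
  qed (use cl K in \<open>simp_all add: clinear_def mult.commute\<close>)
qed

lemma parallelogram:
  fixes a b :: "'a::complex_inner"
  shows "(norm (a + b))\<^sup>2 + (norm (a - b))\<^sup>2 = 2 * (norm a)\<^sup>2 + 2 * (norm b)\<^sup>2"
  by (simp add: norm_sq_cinner cinner_add_left cinner_add_right cinner_diff_left cinner_diff_right)

lemma sq_bound:
  fixes d e :: real assumes "0 \<le> d" "0 \<le> e" "e \<le> 1"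
  shows "(d + e)\<^sup>2 \<le> d\<^sup>2 + (2 * d + 1) * e"
proof -
  have "e * e \<le> e" using assms by (simp add: mult_le_one mult_left_le)
  thus ?thesis by (simp add: power2_eq_square algebra_simps)
qed




lemma riesz:
  fixes l :: "'a::chilbert_space \<Rightarrow> complex"
  assumes add: "\<And>x y. l (x + y) = l x + l y" and sc: "\<And>c x. l (c *\<^sub>C x) = c * l x"
    and bd: "\<And>x. cmod (l x) \<le> K * norm x"
  shows "\<exists>r. \<forall>x. l x = cinner r x"
proof (cases "\<forall>x. l x = 0")
  case True thus ?thesis by (intro exI[of _ 0]) simp
next
  case False
  have bl: "bounded_linear l" by (rule bl_functional[OF add sc bd])
  from False obtain z1 where z1: "l z1 \<noteq> 0" by auto
  define z0 where "z0 = inverse (l z1) *\<^sub>C z1"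
  have lz0: "l z0 = 1" using z1 by (simp add: z0_def sc)
  have l0: "l 0 = 0" using sc[of 0 0] by simp
  have ldiff: "l (x - y) = l x - l y" for x y using add[of "x - y" y] by simp
  define N where "N = {n. l n = 0}"
  define D where "D = (\<lambda>n. norm (z0 - n)) ` N"
  define d where "d = Inf D"
  have Dne: "D \<noteq> {}" using l0 by (auto simp: D_def N_def)
  have Dbdd: "bdd_below D" by (auto simp: D_def intro!: bdd_belowI[of _ 0])
  have dle: "d \<le> norm (z0 - n)" if "l n = 0" for n
    unfolding d_def using that by (intro cInf_lower[OF _ Dbdd]) (auto simp: D_def N_def)
  have d0: "0 \<le> d" unfolding d_def using Dne by (intro cInf_greatest) (auto simp: D_def)
  define eps where "eps = (\<lambda>k::nat. inverse (real (Suc k)))"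
  have epspos: "0 < eps k" for k by (simp add: eps_def)
  have eps1: "eps k \<le> 1" for k by (simp add: eps_def inverse_le_1_iff)
  have "\<exists>n. l n = 0 \<and> norm (z0 - n) < d + eps k" for k
  proof -
    have "Inf D < d + eps k" using epspos[of k] by (simp add: d_def)
    from cInf_lessD[OF Dne this] show ?thesis by (auto simp: D_def N_def)
  qed
  then obtain n where nN: "\<And>k. l (n k) = 0" and nd: "\<And>k. norm (z0 - n k) < d + eps k"
    by metis
  have bnd: "(norm (n j - n k))\<^sup>2 \<le> 2 * (2 * d + 1) * (eps j + eps k)" for j k
  proof -
    define m where "m = (1/2::complex) *\<^sub>C (n j + n k)"
    have lm: "l m = 0" by (simp add: m_def sc add nN)
    have e: "(z0 - n j) + (z0 - n k) = (2::complex) *\<^sub>C (z0 - m)"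
    proof -
      have h1: "(2::complex) *\<^sub>C m = n j + n k" by (simp add: m_def scaleC_scaleC scaleC_one)
      have h2: "(2::complex) *\<^sub>C z0 = z0 + z0" using scaleC_add_left[of 1 1 z0] by (simp add: scaleC_one)
      show ?thesis by (simp add: scaleC_diff_right h1 h2 algebra_simps)
    qed
    have "norm ((z0 - n j) + (z0 - n k)) = 2 * norm (z0 - m)" by (simp add: e norm_scaleC)
    hence ge: "norm ((z0 - n j) + (z0 - n k)) \<ge> 2 * d" using dle[OF lm] by simp
    have par: "(norm ((z0 - n j) + (z0 - n k)))\<^sup>2 + (norm (n j - n k))\<^sup>2
        = 2 * (norm (z0 - n j))\<^sup>2 + 2 * (norm (z0 - n k))\<^sup>2"
      using parallelogram[of "z0 - n j" "z0 - n k"] by (simp add: norm_minus_commute)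
    have "(norm (z0 - n j))\<^sup>2 \<le> (d + eps j)\<^sup>2"
      by (rule power_mono) (use nd[of j] in auto)
    hence s1: "(norm (z0 - n j))\<^sup>2 \<le> d\<^sup>2 + (2 * d + 1) * eps j"
      using sq_bound[OF d0 less_imp_le[OF epspos[of j]] eps1[of j]] by linarith
    have "(norm (z0 - n k))\<^sup>2 \<le> (d + eps k)\<^sup>2"
      by (rule power_mono) (use nd[of k] in auto)
    hence s2: "(norm (z0 - n k))\<^sup>2 \<le> d\<^sup>2 + (2 * d + 1) * eps k"
      using sq_bound[OF d0 less_imp_le[OF epspos[of k]] eps1[of k]] by linarith
    have "(2 * d)\<^sup>2 \<le> (norm ((z0 - n j) + (z0 - n k)))\<^sup>2"
      using ge d0 by (intro power_mono) auto
    moreover have "(2 * d)\<^sup>2 = 4 * d\<^sup>2" by (simp add: power_mult_distrib)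
    ultimately show ?thesis using par s1 s2 by (simp add: algebra_simps)
  qed
  have "Cauchy n"
  proof (rule CauchyI)
    fix e :: real assume e: "0 < e"
    obtain M :: nat where M: "4 * (2 * d + 1) / e\<^sup>2 < real M" using reals_Archimedean2 by blast
    show "\<exists>M. \<forall>j\<ge>M. \<forall>k\<ge>M. norm (n j - n k) < e"
    proof (intro exI[of _ M] allI impI)
      fix j k assume j: "M \<le> j" and k: "M \<le> k"
      have ej: "eps j \<le> inverse (real (Suc M))" unfolding eps_def
        by (rule le_imp_inverse_le) (use j in auto)
      have ek: "eps k \<le> inverse (real (Suc M))" unfolding eps_def
        by (rule le_imp_inverse_le) (use k in auto)
      have c0: "0 \<le> 2 * (2 * d + 1)" using d0 by simp
      have "(norm (n j - n k))\<^sup>2 \<le> 2 * (2 * d + 1) * (eps j + eps k)" by (rule bnd)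
      also have "\<dots> \<le> 2 * (2 * d + 1) * (2 * inverse (real (Suc M)))"
        by (rule mult_left_mono[OF _ c0]) (use ej ek in linarith)
      also have "\<dots> = 4 * (2 * d + 1) / real (Suc M)" by (simp add: field_simps)
      also have "\<dots> < e\<^sup>2"
      proof -
        have e2: "0 < e\<^sup>2" using e by simp
        have "4 * (2 * d + 1) < real M * e\<^sup>2" using M e2 by (simp add: pos_divide_less_eq)
        also have "\<dots> \<le> real (Suc M) * e\<^sup>2" using e2 by simp
        finally show ?thesis by (simp add: pos_divide_less_eq mult.commute)
      qed
      finally have sq: "(norm (n j - n k))\<^sup>2 < e\<^sup>2" .
      show "norm (n j - n k) < e" using power2_less_imp_less[OF sq] e by simp
    qed
  qed
  then obtain n0 where lim: "n \<longlonglongrightarrow> n0" using Cauchy_convergent convergent_def by blast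
  have "(\<lambda>k. l (n k)) \<longlonglongrightarrow> l n0" by (rule bounded_linear.tendsto[OF bl lim])
  hence ln0: "l n0 = 0" using nN by (simp add: LIMSEQ_const_iff)
  have t1: "(\<lambda>k. norm (z0 - n k)) \<longlonglongrightarrow> norm (z0 - n0)"
    by (intro tendsto_intros lim)
  have t2: "(\<lambda>k. d + eps k) \<longlonglongrightarrow> d" unfolding eps_def by (rule LIMSEQ_inverse_real_of_nat_add)
  have pd: "norm (z0 - n0) \<le> d"
    by (rule LIMSEQ_le[OF t1 t2]) (intro exI[of _ 0] allI impI less_imp_le nd)
  define p where "p = z0 - n0"
  have lp: "l p = 1" using lz0 ln0 by (simp add: p_def ldiff)
  have orth: "cinner m p = 0" if "l m = 0" for m
  proof (rule orth_of_min)
    fix t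
    have "l (n0 + t *\<^sub>C m) = 0" using ln0 that by (simp add: add sc)
    hence "d \<le> norm (z0 - (n0 + t *\<^sub>C m))" by (rule dle)
    moreover have "z0 - (n0 + t *\<^sub>C m) = p - t *\<^sub>C m" by (simp add: p_def diff_diff_eq)
    ultimately have "norm p \<le> norm (p - t *\<^sub>C m)" using pd by (simp add: p_def)
    hence "(norm p)\<^sup>2 \<le> (norm (p - t *\<^sub>C m))\<^sup>2" by (intro power_mono) auto
    thus "Re (cinner p p) \<le> Re (cinner (p - t *\<^sub>C m) (p - t *\<^sub>C m))" by (simp add: norm_sq_cinner)
  qed
  have pp: "cinner p p \<noteq> 0" using lp l0 cinner_eq_zero_iff[of p] by auto
  have rep: "cinner p z = l z * cinner p p" for z
  proof -
    have "l (z - l z *\<^sub>C p) = 0" by (simp add: ldiff sc lp)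
    hence "cinner (z - l z *\<^sub>C p) p = 0" by (rule orth)
    hence "cinner p (z - l z *\<^sub>C p) = 0" using cinner_commute[of p "z - l z *\<^sub>C p"] by simp
    thus ?thesis by (simp add: cinner_diff_right cinner_scaleC_right)
  qed
  show ?thesis
  proof (intro exI[of _ "cnj (inverse (cinner p p)) *\<^sub>C p"] allI)
    fix x
    have "cinner (cnj (inverse (cinner p p)) *\<^sub>C p) x = inverse (cinner p p) * cinner p x"
      by (simp add: cinner_scaleC_left)
    also have "\<dots> = l x" using pp by (simp only: rep[of x]) simp
    finally show "l x = cinner (cnj (inverse (cinner p p)) *\<^sub>C p) x" by simp
  qed
qed




lemma cinner_ext:
  fixes u v :: "'a::complex_inner"
  assumes "\<And>x. cinner x u = cinner x v" shows "u = v"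
proof -
  have "cinner (u - v) (u - v) = 0" using assms[of "u - v"] by (simp add: cinner_diff_right)
  thus ?thesis using cinner_eq_zero_iff[of "u - v"] by simp
qed

lemma adj_unique:
  fixes S G :: "'a::complex_inner \<Rightarrow> 'a"
  assumes G: "\<And>x y. cinner (S x) y = cinner x (G y)"
  shows "adj S = G"
  unfolding adj_def
proof (rule the_equality)
  show "\<forall>x y. cinner (S x) y = cinner x (G y)" using G by blast
next
  fix G' assume h: "\<forall>x y. cinner (S x) y = cinner x (G' y)"
  show "G' = G"
  proof
    fix y show "G' y = G y" by (rule cinner_ext) (metis h G)
  qed
qed

lemma adj_bops:
  fixes S :: "'a::chilbert_space \<Rightarrow> 'a"
  assumes S: "S \<in> bops"
  shows "\<forall>x y. cinner (S x) y = cinner x (adj S y)" and "clinear (adj S)"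
proof -
  from S obtain K where cl: "clinear S" and K: "\<And>x. norm (S x) \<le> K * norm x"
    unfolding bops_def by auto
  have "\<exists>r. \<forall>x. cinner y (S x) = cinner r x" for y
  proof (rule riesz[where K="norm y * K"])
    fix a b show "cinner y (S (a + b)) = cinner y (S a) + cinner y (S b)"
      using cl by (simp add: clinear_def cinner_add_right)
  next
    fix c a show "cinner y (S (c *\<^sub>C a)) = c * cinner y (S a)"
      using cl by (simp add: clinear_def cinner_scaleC_right)
  next
    fix a
    have "cmod (cinner y (S a)) \<le> norm y * norm (S a)" by (rule cauchy_schwarz)
    also have "\<dots> \<le> norm y * (K * norm a)" by (rule mult_left_mono[OF K]) simp
    finally show "cmod (cinner y (S a)) \<le> norm y * K * norm a" by (simp add: mult.assoc)
  qed
  then obtain G where G0: "\<And>y x. cinner y (S x) = cinner (G y) x" by metis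
  have G: "cinner (S x) y = cinner x (G y)" for x y
    using G0[of y x] cinner_commute[of "S x" y] cinner_commute[of "G y" x] by simp
  have aS: "adj S = G" by (rule adj_unique[OF G])
  show "\<forall>x y. cinner (S x) y = cinner x (adj S y)" using G aS by simp
  show "clinear (adj S)" unfolding aS clinear_def
  proof (intro conjI allI)
    fix a b show "G (a + b) = G a + G b"
      by (rule cinner_ext) (simp add: G[symmetric] cinner_add_right)
  next
    fix c a show "G (c *\<^sub>C a) = c *\<^sub>C G a"
      by (rule cinner_ext) (simp add: G[symmetric] cinner_scaleC_right)
  qed
qed




lemma res_elim:
  assumes "\<mu> \<in> local_resolvent T w"
  obtains U f where "open U" "\<mu> \<in> U" "hol_on f U" "\<And>\<nu>. \<nu> \<in> U \<Longrightarrow> \<nu> *\<^sub>C f \<nu> - T (f \<nu>) = w"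
  using assms unfolding local_resolvent_def by blast

lemma res_intro:
  assumes "open U" "\<mu> \<in> U" "hol_on f U" "\<And>\<nu>. \<nu> \<in> U \<Longrightarrow> \<nu> *\<^sub>C f \<nu> - T (f \<nu>) = w"
  shows "\<mu> \<in> local_resolvent T w"
  using assms unfolding local_resolvent_def by blast

lemma res_point:
  assumes "\<mu> \<in> local_resolvent T w" shows "\<exists>z. \<mu> *\<^sub>C z - T z = w"
  using assms by (rule res_elim) blast

lemma ss_iff: "w \<in> spectral_subspace T {l} \<longleftrightarrow> (\<forall>\<mu>. \<mu> \<noteq> l \<longrightarrow> \<mu> \<in> local_resolvent T w)"
  unfolding spectral_subspace_def local_spectrum_def by auto

lemma hol_scal:
  fixes v :: "'a::complex_inner"
  assumes "(g has_field_derivative D) (at z)"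
  shows "((\<lambda>\<mu>. g \<mu> *\<^sub>C v) has_derivative (\<lambda>h. h *\<^sub>C (D *\<^sub>C v))) (at z)"
proof -
  have "((\<lambda>\<mu>. g \<mu> *\<^sub>C v) has_derivative (\<lambda>h. (D * h) *\<^sub>C v)) (at z)"
    using bounded_linear.has_derivative[OF bl_scaleC_left, of g "(*) D" "at z" v] assms
    by (simp add: has_field_derivative_def)
  moreover have "(\<lambda>h. (D * h) *\<^sub>C v) = (\<lambda>h. h *\<^sub>C (D *\<^sub>C v))"
    by (simp add: scaleC_scaleC mult.commute)
  ultimately show ?thesis by simp
qed

lemma eigen_ss:
  fixes B :: "'a::complex_inner \<Rightarrow> 'a"
  assumes cl: "clinear B" and ev: "B v = \<alpha> *\<^sub>C v"
  shows "v \<in> spectral_subspace B {\<alpha>}"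
  unfolding ss_iff
proof (intro allI impI)
  fix \<mu> assume "\<mu> \<noteq> \<alpha>"
  show "\<mu> \<in> local_resolvent B v"
  proof (rule res_intro[where U="- {\<alpha>}" and f="\<lambda>\<nu>. inverse (\<nu> - \<alpha>) *\<^sub>C v"])
    show "open (- {\<alpha>})" by (simp add: open_Compl)
    show "\<mu> \<in> - {\<alpha>}" using \<open>\<mu> \<noteq> \<alpha>\<close> by simp
    show "hol_on (\<lambda>\<nu>. inverse (\<nu> - \<alpha>) *\<^sub>C v) (- {\<alpha>})"
      unfolding hol_on_def
    proof
      fix z assume "z \<in> - {\<alpha>}"
      hence z: "z - \<alpha> \<noteq> 0" by simp
      have "((\<lambda>\<nu>. inverse (\<nu> - \<alpha>)) has_field_derivative (- inverse ((z - \<alpha>)^2))) (at z)"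
        using z by (auto intro!: derivative_eq_intros simp: power2_eq_square field_simps)
      from hol_scal[OF this] show "\<exists>D. ((\<lambda>\<nu>. inverse (\<nu> - \<alpha>) *\<^sub>C v) has_derivative (\<lambda>h. h *\<^sub>C D)) (at z)"
        by blast
    qed
  next
    fix \<nu> assume "\<nu> \<in> - {\<alpha>}"
    hence n: "\<nu> - \<alpha> \<noteq> 0" by simp
    have "\<nu> *\<^sub>C (inverse (\<nu> - \<alpha>) *\<^sub>C v) - B (inverse (\<nu> - \<alpha>) *\<^sub>C v)
        = inverse (\<nu> - \<alpha>) *\<^sub>C (\<nu> *\<^sub>C v - \<alpha> *\<^sub>C v)"
      using cl ev by (simp add: clinear_def scaleC_diff_right scaleC_scaleC mult.commute)
    also have "\<dots> = (inverse (\<nu> - \<alpha>) * (\<nu> - \<alpha>)) *\<^sub>C v"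
      by (simp add: scaleC_diff_left[symmetric] scaleC_scaleC)
    also have "\<dots> = v" using n by (simp add: scaleC_one)
    finally show "\<nu> *\<^sub>C (inverse (\<nu> - \<alpha>) *\<^sub>C v) - B (inverse (\<nu> - \<alpha>) *\<^sub>C v) = v" .
  qed
qed

lemma R1:
  assumes rng: "\<And>z. \<exists>c. B z = c *\<^sub>C u" and l: "l \<noteq> 0"
    and w: "w \<in> spectral_subspace B {l}"
  shows "\<exists>c. w = c *\<^sub>C u"
proof -
  have "0 \<in> local_resolvent B w" using w l unfolding ss_iff by auto
  from res_point[OF this] obtain z where "0 *\<^sub>C z - B z = w" by blast
  hence "w = - B z" by simp
  moreover obtain c where "B z = c *\<^sub>C u" using rng by blast
  ultimately show ?thesis by (intro exI[of _ "- c"]) (simp add: scaleC_minus_left)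
qed

lemma R2:
  fixes x u :: "'a::complex_inner"
  assumes l: "l \<noteq> 0" and w: "w \<in> spectral_subspace (\<lambda>v. cinner x v *\<^sub>C u) {l}" and w0: "w \<noteq> 0"
  shows "l = cinner x u"
proof (rule ccontr)
  assume ne: "l \<noteq> cinner x u"
  define \<alpha> where "\<alpha> = cinner x u"
  define B where "B = (\<lambda>v. cinner x v *\<^sub>C u)"
  obtain c where wc: "w = c *\<^sub>C u" using R1[of B u l w] l w unfolding B_def by blast
  have c0: "c \<noteq> 0" and u0: "u \<noteq> 0" using w0 wc by auto
  have "\<alpha> \<in> local_resolvent B w" using w ne unfolding ss_iff B_def \<alpha>_def by auto
  then obtain U f where U: "open U" "\<alpha> \<in> U" and hf: "hol_on f U"
    and eq: "\<And>\<nu>. \<nu> \<in> U \<Longrightarrow> \<nu> *\<^sub>C f \<nu> - B (f \<nu>) = w" by (rule res_elim) blast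
  have eq2: "\<nu> * cinner x (f \<nu>) - cinner x (f \<nu>) * \<alpha> = c * \<alpha>" if "\<nu> \<in> U" for \<nu>
  proof -
    have "cinner x (\<nu> *\<^sub>C f \<nu> - B (f \<nu>)) = cinner x w" using eq[OF that] by simp
    thus ?thesis by (simp add: B_def wc cinner_diff_right cinner_scaleC_right \<alpha>_def)
  qed
  show False
  proof (cases "\<alpha> = 0")
    case False
    from eq2[OF U(2)] have "c * \<alpha> = 0" by (simp add: mult.commute)
    thus False using c0 False by simp
  next
    case True
    have z: "\<nu> * cinner x (f \<nu>) = 0" if "\<nu> \<in> U" for \<nu> using eq2[OF that] True by simp
    have f0: "cinner x (f 0) = - c"
    proof -
      have "0 *\<^sub>C f 0 - B (f 0) = w" using eq[of 0] U True by simp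
      hence "cinner x (f 0) *\<^sub>C u = (- c) *\<^sub>C u" by (simp add: B_def wc scaleC_minus_left minus_equation_iff)
      hence "(cinner x (f 0) + c) *\<^sub>C u = 0" by (simp add: scaleC_add_left scaleC_minus_left)
      thus ?thesis using u0 by (simp add: eq_neg_iff_add_eq_0)
    qed
    obtain D where "(f has_derivative (\<lambda>h. h *\<^sub>C D)) (at 0)"
      using hf U True unfolding hol_on_def by blast
    hence "isCont f 0" by (rule has_derivative_continuous)
    hence cont: "isCont (\<lambda>\<nu>. cinner x (f \<nu>)) 0"
      by (rule isCont_o2[OF _ linear_continuous_at[OF bl_cinner]])
    have ev: "\<forall>\<^sub>F \<nu> in at 0. cinner x (f \<nu>) = 0"
    proof -
      have "\<forall>\<^sub>F \<nu> in at 0. \<nu> \<in> U \<and> \<nu> \<noteq> 0"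
        using U True by (auto simp: eventually_at_topological)
      thus ?thesis by eventually_elim (use z in auto)
    qed
    have "((\<lambda>\<nu>. cinner x (f \<nu>)) \<longlongrightarrow> cinner x (f 0)) (at 0)"
      using cont by (simp add: isCont_def)
    moreover have "((\<lambda>\<nu>. cinner x (f \<nu>)) \<longlongrightarrow> 0) (at 0)"
      by (rule tendsto_eventually[OF ev])
    ultimately have "cinner x (f 0) = 0" by (rule tendsto_unique[rotated]) simp
    thus False using f0 c0 by simp
  qed
qed

lemma res_scale:
  fixes B :: "'a::complex_inner \<Rightarrow> 'a"
  assumes c: "c \<noteq> 0" and cl: "clinear B" and mu: "\<mu> \<in> local_resolvent B w"
  shows "c * \<mu> \<in> local_resolvent (\<lambda>v. c *\<^sub>C B v) w"
proof -
  from mu obtain U f where U: "open U" "\<mu> \<in> U" and hf: "hol_on f U"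
    and eq: "\<And>\<nu>. \<nu> \<in> U \<Longrightarrow> \<nu> *\<^sub>C f \<nu> - B (f \<nu>) = w" by (rule res_elim) blast
  define ic where "ic = inverse c"
  have icc: "ic * c = 1" using c by (simp add: ic_def)
  define U' where "U' = (\<lambda>\<nu>. ic * \<nu>) -` U"
  define g where "g = (\<lambda>\<nu>. ic *\<^sub>C f (ic * \<nu>))"
  show ?thesis
  proof (rule res_intro[where U=U' and f=g])
    show "open U'" unfolding U'_def
      by (rule continuous_open_vimage[OF U(1)]) (intro continuous_intros)
    show "c * \<mu> \<in> U'" using U(2) icc by (simp add: U'_def mult.assoc[symmetric])
    show "hol_on g U'" unfolding hol_on_def
    proof
      fix z assume "z \<in> U'"
      hence "ic * z \<in> U" by (simp add: U'_def)
      then obtain D where D: "(f has_derivative (\<lambda>h. h *\<^sub>C D)) (at (ic * z))"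
        using hf unfolding hol_on_def by blast
      have inner: "((\<lambda>\<nu>. ic * \<nu>) has_derivative (\<lambda>h. ic * h)) (at z)"
        by (rule has_derivative_mult_right[OF has_derivative_ident])
      have "((\<lambda>\<nu>. f (ic * \<nu>)) has_derivative (\<lambda>h. (ic * h) *\<^sub>C D)) (at z)"
        using has_derivative_compose[OF inner D] by simp
      from bounded_linear.has_derivative[OF bl_scaleC_right this, of ic]
      have "(g has_derivative (\<lambda>h. ic *\<^sub>C ((ic * h) *\<^sub>C D))) (at z)" by (simp add: g_def)
      moreover have "(\<lambda>h. ic *\<^sub>C ((ic * h) *\<^sub>C D)) = (\<lambda>h. h *\<^sub>C ((ic * ic) *\<^sub>C D))"
        by (simp add: scaleC_scaleC mult_ac)
      ultimately show "\<exists>D. (g has_derivative (\<lambda>h. h *\<^sub>C D)) (at z)" by auto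
    qed
  next
    fix \<nu> assume "\<nu> \<in> U'"
    hence nu: "ic * \<nu> \<in> U" by (simp add: U'_def)
    have "\<nu> *\<^sub>C g \<nu> - c *\<^sub>C B (g \<nu>) = (ic * \<nu>) *\<^sub>C f (ic * \<nu>) - B (f (ic * \<nu>))"
      using cl icc by (simp add: g_def clinear_def scaleC_scaleC mult_ac scaleC_one)
    also have "\<dots> = w" by (rule eq[OF nu])
    finally show "\<nu> *\<^sub>C g \<nu> - c *\<^sub>C B (g \<nu>) = w" .
  qed
qed

lemma clinear_scale: "clinear B \<Longrightarrow> clinear (\<lambda>v. c *\<^sub>C B v)"
  unfolding clinear_def by (simp add: scaleC_add_right scaleC_left_commute)

lemma ss_scale:
  fixes B :: "'a::complex_inner \<Rightarrow> 'a"
  assumes c: "c \<noteq> 0" and cl: "clinear B"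
  shows "spectral_subspace (\<lambda>v. c *\<^sub>C B v) {l} = spectral_subspace B {l / c}"
proof (intro set_eqI iffI)
  fix w assume w: "w \<in> spectral_subspace (\<lambda>v. c *\<^sub>C B v) {l}"
  show "w \<in> spectral_subspace B {l / c}" unfolding ss_iff
  proof (intro allI impI)
    fix \<mu> assume "\<mu> \<noteq> l / c"
    hence "c * \<mu> \<noteq> l" using c by (auto simp: field_simps)
    hence "c * \<mu> \<in> local_resolvent (\<lambda>v. c *\<^sub>C B v) w" using w unfolding ss_iff by auto
    from res_scale[OF _ clinear_scale[OF cl] this, of "inverse c"] c
    have "inverse c * (c * \<mu>) \<in> local_resolvent (\<lambda>v. inverse c *\<^sub>C c *\<^sub>C B v) w" by simp
    moreover have "(\<lambda>v. inverse c *\<^sub>C c *\<^sub>C B v) = B" using c by (simp add: scaleC_scaleC scaleC_one)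
    ultimately show "\<mu> \<in> local_resolvent B w" using c by (simp add: mult.assoc[symmetric])
  qed
next
  fix w assume w: "w \<in> spectral_subspace B {l / c}"
  show "w \<in> spectral_subspace (\<lambda>v. c *\<^sub>C B v) {l}" unfolding ss_iff
  proof (intro allI impI)
    fix \<mu> assume "\<mu> \<noteq> l"
    hence "\<mu> / c \<noteq> l / c" using c by (auto simp: field_simps)
    hence "\<mu> / c \<in> local_resolvent B w" using w unfolding ss_iff by auto
    from res_scale[OF c cl this] show "\<mu> \<in> local_resolvent (\<lambda>v. c *\<^sub>C B v) w" using c by simp
  qed
qed




lemma cspan_empty: "cspan ({}::'a::complex_vector set) = {0}"
  unfolding cspan_def by auto

lemma cspan_single: "x \<in> cspan {a} \<Longrightarrow> \<exists>c. x = c *\<^sub>C (a::'a::complex_vector)"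
  unfolding cspan_def
proof (elim CollectE exE conjE)
  fix F c assume F: "F \<subseteq> {a}" and x: "x = (\<Sum>v\<in>F. c v *\<^sub>C v)"
  from F have "F = {} \<or> F = {a}" by auto
  thus "\<exists>c. x = c *\<^sub>C a"
  proof
    assume "F = {}" thus ?thesis using x by (intro exI[of _ 0]) simp
  next
    assume "F = {a}" thus ?thesis using x by auto
  qed
qed

lemma cspan_two: "c1 *\<^sub>C x1 + c2 *\<^sub>C x2 \<in> cspan {x1, x2::'a::complex_vector}"
  unfolding cspan_def
proof (cases "x1 = x2")
  case True
  show "c1 *\<^sub>C x1 + c2 *\<^sub>C x2 \<in> {x. \<exists>F c. finite F \<and> F \<subseteq> {x1, x2} \<and> x = (\<Sum>v\<in>F. c v *\<^sub>C v)}"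
    using True by (intro CollectI exI[of _ "{x1}"] exI[of _ "\<lambda>_. c1 + c2"]) (simp add: scaleC_add_left)
next
  case False
  show "c1 *\<^sub>C x1 + c2 *\<^sub>C x2 \<in> {x. \<exists>F c. finite F \<and> F \<subseteq> {x1, x2} \<and> x = (\<Sum>v\<in>F. c v *\<^sub>C v)}"
    using False by (intro CollectI exI[of _ "{x1, x2}"] exI[of _ "\<lambda>v. if v = x1 then c1 else c2"]) simp
qed

lemma rank_le0: "rank_le X 0 \<longleftrightarrow> (\<forall>z. X z = (0::'a::complex_vector))"
proof
  assume "rank_le X 0"
  then obtain V where "finite V" "card V \<le> 0" "range X \<subseteq> cspan V" unfolding rank_le_def by blast
  hence "V = {}" by simp
  with \<open>range X \<subseteq> cspan V\<close> show "\<forall>z. X z = 0" by (auto simp: cspan_empty)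
next
  assume "\<forall>z. X z = 0"
  thus "rank_le X 0" unfolding rank_le_def
    by (intro exI[of _ "{}"]) (auto simp: cspan_empty)
qed

lemma rank_le1: "rank_le X 1 \<Longrightarrow> \<exists>u. \<forall>z. \<exists>c. X z = c *\<^sub>C (u::'a::complex_vector)"
proof -
  assume "rank_le X 1"
  then obtain V where V: "finite V" "card V \<le> 1" "range X \<subseteq> cspan V" unfolding rank_le_def by blast
  hence "V = {} \<or> (\<exists>a. V = {a})" by (metis card_0_eq card_1_singletonE le_Suc_eq One_nat_def le_zero_eq)
  thus ?thesis
  proof
    assume "V = {}" thus ?thesis using V by (intro exI[of _ 0]) (auto simp: cspan_empty)
  next
    assume "\<exists>a. V = {a}"
    then obtain a where "V = {a}" by blast
    thus ?thesis using V cspan_single by (intro exI[of _ a]) blast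
  qed
qed

lemma not_rank_le1:
  fixes X :: "'a::complex_vector \<Rightarrow> 'a"
  assumes "\<not> rank_le X 1"
  shows "\<exists>y1 y2. X y1 \<noteq> 0 \<and> (\<forall>c. X y2 \<noteq> c *\<^sub>C X y1)"
proof -
  have "\<exists>y1. X y1 \<noteq> 0"
  proof (rule ccontr)
    assume "\<not> ?thesis"
    hence "rank_le X 0" by (simp add: rank_le0)
    hence "rank_le X 1" unfolding rank_le_def by force
    thus False using assms by simp
  qed
  then obtain y1 where y1: "X y1 \<noteq> 0" by blast
  have "\<exists>y2. \<forall>c. X y2 \<noteq> c *\<^sub>C X y1"
  proof (rule ccontr)
    assume "\<not> ?thesis"
    hence h: "\<forall>y. \<exists>c. X y = c *\<^sub>C X y1" by blast
    have "range X \<subseteq> cspan {X y1}"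
    proof
      fix v assume "v \<in> range X"
      then obtain y where v: "v = X y" by blast
      obtain c where "X y = c *\<^sub>C X y1" using h by blast
      hence "v = c *\<^sub>C X y1 + 0 *\<^sub>C X y1" using v by simp
      thus "v \<in> cspan {X y1}" using cspan_two[of c "X y1" 0 "X y1"] by simp
    qed
    hence "rank_le X 1" unfolding rank_le_def by (intro exI[of _ "{X y1}"]) simp
    thus False using assms by simp
  qed
  thus ?thesis using y1 by blast
qed

lemma gs:
  fixes a b :: "'a::complex_inner"
  assumes a0: "a \<noteq> 0" and nb: "\<forall>c. b \<noteq> c *\<^sub>C a"
  shows "\<exists>x. cinner x a = 0 \<and> cinner x b = 1"
proof -
  have aa: "cinner a a \<noteq> 0" using a0 cinner_eq_zero_iff by auto
  define k where "k = cinner a b / cinner a a"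
  define p where "p = b - k *\<^sub>C a"
  have ap: "cinner a p = 0" using aa by (simp add: p_def k_def cinner_diff_right cinner_scaleC_right)
  have pa: "cinner p a = 0" using cinner_commute[of p a] ap by simp
  have p0: "p \<noteq> 0" using nb by (auto simp: p_def)
  have pp: "cinner p p \<noteq> 0" using p0 cinner_eq_zero_iff by auto
  have bp: "b = p + k *\<^sub>C a" by (simp add: p_def)
  have pb: "cinner p b = cinner p p"
    by (subst bp) (simp add: cinner_add_right cinner_scaleC_right pa)
  show ?thesis
    by (intro exI[of _ "cnj (inverse (cinner p p)) *\<^sub>C p"])
       (simp add: cinner_scaleC_left pa pb pp)
qed

lemma clinear_comp: "clinear A \<Longrightarrow> clinear B \<Longrightarrow> clinear (A \<circ> B)"
  unfolding clinear_def by simp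

lemma clinear_rank1: "clinear (\<lambda>w. cinner x w *\<^sub>C (u::'a::complex_inner))"
  unfolding clinear_def by (simp add: cinner_add_right cinner_scaleC_right scaleC_add_left scaleC_scaleC)

lemma two_bops:
  fixes x1 x2 y1 y2 :: "'a::complex_inner"
  shows "(\<lambda>z. cinner y1 z *\<^sub>C x1 + cinner y2 z *\<^sub>C x2) \<in> bops"
    and "rank_le (\<lambda>z. cinner y1 z *\<^sub>C x1 + cinner y2 z *\<^sub>C x2) 2"
proof -
  show "(\<lambda>z. cinner y1 z *\<^sub>C x1 + cinner y2 z *\<^sub>C x2) \<in> bops"
    unfolding bops_def
  proof (intro CollectI conjI)
    show "clinear (\<lambda>z. cinner y1 z *\<^sub>C x1 + cinner y2 z *\<^sub>C x2)"
      unfolding clinear_def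
      by (simp add: cinner_add_right cinner_scaleC_right scaleC_add_left scaleC_add_right scaleC_scaleC)
    show "\<exists>K. \<forall>z. norm (cinner y1 z *\<^sub>C x1 + cinner y2 z *\<^sub>C x2) \<le> K * norm z"
    proof (intro exI allI)
      fix z
      have "norm (cinner y1 z *\<^sub>C x1 + cinner y2 z *\<^sub>C x2)
          \<le> cmod (cinner y1 z) * norm x1 + cmod (cinner y2 z) * norm x2"
        by (metis norm_scaleC norm_triangle_ineq)
      also have "\<dots> \<le> (norm y1 * norm z) * norm x1 + (norm y2 * norm z) * norm x2"
        by (intro add_mono mult_right_mono cauchy_schwarz) auto
      also have "\<dots> = (norm y1 * norm x1 + norm y2 * norm x2) * norm z" by (simp add: algebra_simps)
      finally show "norm (cinner y1 z *\<^sub>C x1 + cinner y2 z *\<^sub>C x2) \<le> (norm y1 * norm x1 + norm y2 * norm x2) * norm z" .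
    qed
  qed
  show "rank_le (\<lambda>z. cinner y1 z *\<^sub>C x1 + cinner y2 z *\<^sub>C x2) 2"
    unfolding rank_le_def
  proof (intro exI[of _ "{x1, x2}"] conjI)
    show "card {x1, x2} \<le> 2" by (simp add: card_insert_if)
    show "range (\<lambda>z. cinner y1 z *\<^sub>C x1 + cinner y2 z *\<^sub>C x2) \<subseteq> cspan {x1, x2}"
      using cspan_two by blast
  qed simp
qed

lemma one_F2:
  fixes x y :: "'a::complex_inner"
  shows "(\<lambda>z. cinner y z *\<^sub>C x) \<in> F2" and "(\<lambda>z. cinner y z *\<^sub>C x) \<in> bops"
proof -
  have e: "(\<lambda>z. cinner y z *\<^sub>C x) = (\<lambda>z. cinner y z *\<^sub>C x + cinner 0 z *\<^sub>C 0)" by simp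
  show "(\<lambda>z. cinner y z *\<^sub>C x) \<in> bops" by (subst e) (rule two_bops(1))
  moreover have "rank_le (\<lambda>z. cinner y z *\<^sub>C x) 2" by (subst e) (rule two_bops(2))
  ultimately show "(\<lambda>z. cinner y z *\<^sub>C x) \<in> F2" unfolding F2_def by simp
qed

lemma adj_one: "adj (\<lambda>z. cinner y z *\<^sub>C x) = (\<lambda>w. cinner x w *\<^sub>C (y::'a::complex_inner))"
  by (rule adj_unique) (simp add: cinner_scaleC_left cinner_scaleC_right cinner_commute[of y])

lemma adj_two: "adj (\<lambda>z. cinner y1 z *\<^sub>C x1 + cinner y2 z *\<^sub>C x2)
   = (\<lambda>w. cinner x1 w *\<^sub>C y1 + cinner x2 w *\<^sub>C (y2::'a::complex_inner))"
  by (rule adj_unique) (simp add: cinner_add_left cinner_add_right cinner_scaleC_left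
      cinner_scaleC_right cinner_commute[of y1] cinner_commute[of y2] mult.commute)

lemma lemmaL:
  fixes A A' :: "'a::complex_inner \<Rightarrow> 'a"
  assumes cA: "clinear A" and cA': "clinear A'"
    and h: "\<And>x y l. spectral_subspace (A \<circ> adj (\<lambda>z. cinner y z *\<^sub>C x)) {l}
                   = spectral_subspace (A' \<circ> adj (\<lambda>z. cinner y z *\<^sub>C x)) {l}"
  shows "A = A'"
proof
  fix y
  show "A y = A' y"
  proof (rule cinner_ext)
    fix x
    have eqA: "A \<circ> adj (\<lambda>z. cinner y z *\<^sub>C x) = (\<lambda>w. cinner x w *\<^sub>C A y)"
      if "clinear A" for A :: "'a \<Rightarrow> 'a" using that by (simp add: adj_one clinear_def o_def)
    have H: "spectral_subspace (\<lambda>w. cinner x w *\<^sub>C A y) {l}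
           = spectral_subspace (\<lambda>w. cinner x w *\<^sub>C A' y) {l}" for l
      using h[of y x l] eqA[OF cA] eqA[OF cA'] by simp
    have one: "cinner x (A1 y) = cinner x (A2 y)"
      if H12: "\<And>l. spectral_subspace (\<lambda>w. cinner x w *\<^sub>C A1 y) {l}
           = spectral_subspace (\<lambda>w. cinner x w *\<^sub>C A2 y) {l}"
      and nz: "cinner x (A1 y) \<noteq> 0" for A1 A2 :: "'a \<Rightarrow> 'a"
    proof -
      have "A1 y \<noteq> 0" using nz by auto
      have "A1 y \<in> spectral_subspace (\<lambda>w. cinner x w *\<^sub>C A1 y) {cinner x (A1 y)}"
        by (rule eigen_ss[OF clinear_rank1]) simp
      hence "A1 y \<in> spectral_subspace (\<lambda>w. cinner x w *\<^sub>C A2 y) {cinner x (A1 y)}" using H12 by simp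
      from R2[OF nz this \<open>A1 y \<noteq> 0\<close>] show ?thesis .
    qed
    show "cinner x (A y) = cinner x (A' y)"
    proof (cases "cinner x (A y) = 0 \<and> cinner x (A' y) = 0")
      case True thus ?thesis by simp
    next
      case F: False
      show ?thesis
      proof (cases "cinner x (A y) = 0")
        case False thus ?thesis using one[of A A'] H by blast
      next
        case True
        hence "cinner x (A' y) \<noteq> 0" using F by simp
        thus ?thesis using one[of A' A] H by metis
      qed
    qed
  qed
qed

definition Pfam :: "('a::complex_inner \<Rightarrow> 'a) \<Rightarrow> bool" where
  "Pfam B \<longleftrightarrow> (\<exists>u. \<forall>w \<in> spectral_subspace B {1}. \<exists>c. w = c *\<^sub>C u)"

lemma RK1: "rank_le X 1 \<Longrightarrow> Pfam (X \<circ> G)"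
proof -
  assume "rank_le X 1"
  then obtain u where u: "\<And>z. \<exists>c. X z = c *\<^sub>C u" using rank_le1 by blast
  have "\<exists>c. (X \<circ> G) z = c *\<^sub>C u" for z using u by simp
  thus "Pfam (X \<circ> G)" unfolding Pfam_def using R1[of "X \<circ> G" u 1] by auto
qed

lemma RK2:
  fixes T :: "'a::chilbert_space \<Rightarrow> 'a"
  assumes T: "T \<in> bops" and nr: "\<not> rank_le T 1"
  shows "\<exists>S \<in> bops. rank_le S 2 \<and> \<not> Pfam (T \<circ> adj S)"
proof -
  have cT: "clinear T" using T by (simp add: bops_def)
  obtain y1 y2 where a0: "T y1 \<noteq> 0" and nb: "\<forall>c. T y2 \<noteq> c *\<^sub>C T y1"
    using not_rank_le1[OF nr] by blast
  define a where "a = T y1"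
  define b where "b = T y2"
  have a0': "a \<noteq> 0" and nb': "\<forall>c. b \<noteq> c *\<^sub>C a" using a0 nb by (auto simp: a_def b_def)
  have b0: "b \<noteq> 0" using nb'[rule_format, of 0] by simp
  have na: "\<forall>c. a \<noteq> c *\<^sub>C b"
  proof
    fix c show "a \<noteq> c *\<^sub>C b"
    proof
      assume h: "a = c *\<^sub>C b"
      hence c0: "c \<noteq> 0" using a0' by auto
      hence "b = inverse c *\<^sub>C a" using h by (simp add: scaleC_scaleC scaleC_one)
      thus False using nb' by blast
    qed
  qed
  obtain x2 where x2: "cinner x2 a = 0" "cinner x2 b = 1" using gs[OF a0' nb'] by blast
  obtain x1 where x1: "cinner x1 b = 0" "cinner x1 a = 1" using gs[OF b0 na] by blast
  define S where "S = (\<lambda>z. cinner y1 z *\<^sub>C x1 + cinner y2 z *\<^sub>C x2)"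
  have SB: "S \<in> bops" and Sr: "rank_le S 2" unfolding S_def by (rule two_bops)+
  have aS: "adj S = (\<lambda>w. cinner x1 w *\<^sub>C y1 + cinner x2 w *\<^sub>C y2)" unfolding S_def by (rule adj_two)
  have TS: "T (adj S w) = cinner x1 w *\<^sub>C a + cinner x2 w *\<^sub>C b" for w
    using cT by (simp add: aS clinear_def a_def b_def)
  have cTS: "clinear (T \<circ> adj S)" using cT adj_bops(2)[OF SB] by (rule clinear_comp)
  have ia: "a \<in> spectral_subspace (T \<circ> adj S) {1}"
    by (rule eigen_ss[OF cTS]) (simp add: TS x1 x2 scaleC_one)
  have ib: "b \<in> spectral_subspace (T \<circ> adj S) {1}"
    by (rule eigen_ss[OF cTS]) (simp add: TS x1 x2 scaleC_one)
  have "\<not> Pfam (T \<circ> adj S)"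
  proof
    assume "Pfam (T \<circ> adj S)"
    then obtain u where u: "\<And>w. w \<in> spectral_subspace (T \<circ> adj S) {1} \<Longrightarrow> \<exists>c. w = c *\<^sub>C u"
      unfolding Pfam_def by blast
    obtain c1 where c1: "a = c1 *\<^sub>C u" using u[OF ia] by blast
    obtain c2 where c2: "b = c2 *\<^sub>C u" using u[OF ib] by blast
    have "c1 \<noteq> 0" using a0' c1 by auto
    hence "b = (c2 / c1) *\<^sub>C a" using c1 c2 by (simp add: scaleC_scaleC)
    thus False using nb' by blast
  qed
  thus ?thesis using SB Sr by blast
qed




theorem mainTheorem2:
  fixes \<phi> :: "('a::chilbert_space \<Rightarrow> 'a) \<Rightarrow> ('a \<Rightarrow> 'a)"
  assumes inf_dim: "infinite_dimensional TYPE('a)"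
    and maps: "\<forall>T\<in>bops. \<phi> T \<in> bops"
    and additive: "\<forall>T\<in>bops. \<forall>S\<in>bops. \<phi> (\<lambda>x. T x + S x) = (\<lambda>x. \<phi> T x + \<phi> S x)"
    and range_F2: "F2 \<subseteq> \<phi> ` bops"
    and preserves: "\<forall>T\<in>bops. \<forall>S\<in>bops. \<forall>l.
        spectral_subspace (\<phi> T \<circ> adj (\<phi> S)) {l} = spectral_subspace (T \<circ> adj S) {l}"
  shows "inj_on \<phi> bops
    \<and> (\<forall>T\<in>bops. \<forall>c. \<phi> (\<lambda>x. c *\<^sub>C T x) = (\<lambda>x. c *\<^sub>C \<phi> T x))
    \<and> (\<forall>R\<in>bops. rank_one R \<longleftrightarrow> rank_one (\<phi> R))"
proof -
  have zB: "(\<lambda>x::'a. 0) \<in> bops" unfolding bops_def clinear_def by (auto intro!: exI[of _ 0])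
  have scB: "(\<lambda>x. c *\<^sub>C T x) \<in> bops" if "T \<in> bops" for T :: "'a \<Rightarrow> 'a" and c
  proof -
    from that obtain K where cl: "clinear T" and K: "\<And>x. norm (T x) \<le> K * norm x"
      unfolding bops_def by auto
    have "norm (c *\<^sub>C T x) \<le> (cmod c * K) * norm x" for x
      using mult_left_mono[OF K[of x], of "cmod c"] by (simp add: norm_scaleC mult.assoc)
    thus ?thesis using clinear_scale[OF cl] unfolding bops_def by blast
  qed
  have clB: "clinear T" if "T \<in> bops" for T :: "'a \<Rightarrow> 'a" using that by (simp add: bops_def)
  have phi0: "\<phi> (\<lambda>x. 0) = (\<lambda>x. 0)"
  proof
    fix x
    have "\<phi> (\<lambda>x. 0) = (\<lambda>x. \<phi> (\<lambda>x. 0) x + \<phi> (\<lambda>x. 0) x)"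
      using additive zB by fastforce
    hence "\<phi> (\<lambda>x. 0) x = \<phi> (\<lambda>x. 0) x + \<phi> (\<lambda>x. 0) x" by metis
    thus "\<phi> (\<lambda>x. 0) x = 0" by simp
  qed
  have inj: "inj_on \<phi> bops"
  proof (rule inj_onI)
    fix T T' assume T: "T \<in> bops" and T': "T' \<in> bops" and eq: "\<phi> T = \<phi> T'"
    show "T = T'"
    proof (rule lemmaL[OF clB[OF T] clB[OF T']])
      fix x y :: 'a and l
      have S: "(\<lambda>z. cinner y z *\<^sub>C x) \<in> bops" by (rule one_F2(2))
      show "spectral_subspace (T \<circ> adj (\<lambda>z. cinner y z *\<^sub>C x)) {l}
          = spectral_subspace (T' \<circ> adj (\<lambda>z. cinner y z *\<^sub>C x)) {l}"
        using preserves T T' S eq by metis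
    qed
  qed
  have lin: "\<phi> (\<lambda>x. c *\<^sub>C T x) = (\<lambda>x. c *\<^sub>C \<phi> T x)" if T: "T \<in> bops" for T c
  proof (cases "c = 0")
    case True thus ?thesis using phi0 by simp
  next
    case c: False
    have cT: "(\<lambda>x. c *\<^sub>C T x) \<in> bops" by (rule scB[OF T])
    have pT: "\<phi> T \<in> bops" using maps T by blast
    show ?thesis
    proof (rule lemmaL)
      show "clinear (\<phi> (\<lambda>x. c *\<^sub>C T x))" using maps cT clB by blast
      show "clinear (\<lambda>x. c *\<^sub>C \<phi> T x)" using clinear_scale clB[OF pT] by blast
    next
      fix x y :: 'a and l
      define S0 where "S0 = (\<lambda>z. cinner y z *\<^sub>C x)"
      have "S0 \<in> F2" unfolding S0_def by (rule one_F2(1))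
      then obtain S where S: "S \<in> bops" and S0: "S0 = \<phi> S" using range_F2 by blast
      have S0B: "S0 \<in> bops" unfolding S0_def by (rule one_F2(2))
      have e1: "(\<lambda>x. c *\<^sub>C T x) \<circ> adj S = (\<lambda>v. c *\<^sub>C (T \<circ> adj S) v)" by (simp add: o_def)
      have e2: "(\<lambda>x. c *\<^sub>C \<phi> T x) \<circ> adj S0 = (\<lambda>v. c *\<^sub>C (\<phi> T \<circ> adj S0) v)" by (simp add: o_def)
      have cl1: "clinear (T \<circ> adj S)" by (rule clinear_comp[OF clB[OF T] adj_bops(2)[OF S]])
      have cl2: "clinear (\<phi> T \<circ> adj S0)" by (rule clinear_comp[OF clB[OF pT] adj_bops(2)[OF S0B]])
      have "spectral_subspace (\<phi> (\<lambda>x. c *\<^sub>C T x) \<circ> adj S0) {l}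
          = spectral_subspace ((\<lambda>x. c *\<^sub>C T x) \<circ> adj S) {l}"
        using preserves cT S S0 by metis
      also have "\<dots> = spectral_subspace (T \<circ> adj S) {l / c}"
        unfolding e1 by (rule ss_scale[OF c cl1])
      also have "\<dots> = spectral_subspace (\<phi> T \<circ> adj S0) {l / c}"
        using preserves T S S0 by metis
      also have "\<dots> = spectral_subspace ((\<lambda>x. c *\<^sub>C \<phi> T x) \<circ> adj S0) {l}"
        unfolding e2 by (rule ss_scale[OF c cl2, symmetric])
      finally show "spectral_subspace (\<phi> (\<lambda>x. c *\<^sub>C T x) \<circ> adj (\<lambda>z. cinner y z *\<^sub>C x)) {l}
          = spectral_subspace ((\<lambda>x. c *\<^sub>C \<phi> T x) \<circ> adj (\<lambda>z. cinner y z *\<^sub>C x)) {l}"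
        unfolding S0_def .
    qed
  qed
  have zero_iff: "\<phi> R = (\<lambda>x. 0) \<longleftrightarrow> R = (\<lambda>x. 0)" if R: "R \<in> bops" for R
    using inj R zB phi0 by (metis inj_on_def)
  have r1: "rank_le R 1 \<longleftrightarrow> rank_le (\<phi> R) 1" if R: "R \<in> bops" for R
  proof
    assume r: "rank_le R 1"
    show "rank_le (\<phi> R) 1"
    proof (rule ccontr)
      assume "\<not> rank_le (\<phi> R) 1"
      from RK2[OF _ this] maps R obtain S0 where S0: "S0 \<in> bops" "rank_le S0 2"
        and np: "\<not> Pfam (\<phi> R \<circ> adj S0)" by blast
      have "S0 \<in> F2" using S0 by (simp add: F2_def)
      then obtain S where S: "S \<in> bops" and e: "S0 = \<phi> S" using range_F2 by blast
      have "Pfam (R \<circ> adj S)" by (rule RK1[OF r])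
      moreover have "Pfam (\<phi> R \<circ> adj S0) = Pfam (R \<circ> adj S)"
        unfolding Pfam_def using preserves R S e by metis
      ultimately show False using np by simp
    qed
  next
    assume r: "rank_le (\<phi> R) 1"
    show "rank_le R 1"
    proof (rule ccontr)
      assume "\<not> rank_le R 1"
      from RK2[OF R this] obtain S where S: "S \<in> bops" "rank_le S 2"
        and np: "\<not> Pfam (R \<circ> adj S)" by blast
      have "Pfam (\<phi> R \<circ> adj (\<phi> S))" by (rule RK1[OF r])
      moreover have "Pfam (\<phi> R \<circ> adj (\<phi> S)) = Pfam (R \<circ> adj S)"
        unfolding Pfam_def using preserves R S by metis
      ultimately show False using np by simp
    qed
  qed
  have rk: "rank_one R \<longleftrightarrow> rank_one (\<phi> R)" if R: "R \<in> bops" for R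
  proof -
    have "rank_le R 0 \<longleftrightarrow> rank_le (\<phi> R) 0"
      using zero_iff[OF R] by (simp add: rank_le0 fun_eq_iff)
    thus ?thesis unfolding rank_one_def using r1[OF R] by simp
  qed
  show ?thesis using inj lin rk by blast
qed



end
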